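(* Let $T$ be a countable Dedekind domain such that $T/J$ is finite for every nonzero ideal $J\subset T$, let $a\in T$ be nonzero and not a unit, and let $R=T/aT$. Let $N$ be a finite $R$-module, $\delta>0$ a real number, $\epsilon_R>0$ a real number, and $n$ a positive integer; let $V=R^n$. Let $X$ be an $\epsilon_R$-balanced random vector valued in $V$, let $F\in\mathrm{Hom}_R(V,N)$ be a code of distance $\delta n$, and let $A\in N$. Then \[\left|\mathbb{P}(FX=A)-|N|^{-1}\right|\leq\exp(-\epsilon_R\delta n/|R|^2).\]
   Context: A random variable $y$ valued in $R$ is $\epsilon_R$-balanced if for every ideal $I$ of $R$ such that $R/I$ is an elementary abelian group (i.e. $R/I\simeq(\mathbb{Z}/p\mathbb{Z})^m$ as abelian groups for some prime $p$ and $m>0$), the image of $y$ in $R/I$ lies in any given proper affine $\mathbb{F}_p$-subspace of $R/I$ with probability at most $1-\epsilon_R$. A random vector is $\epsilon_R$-balanced if its entries are independent and $\epsilon_R$-balanced. Let $v_1,\dots,v_n$ be the standard basis of $V=R^n$; for $\sigma\subset[n]=\{1,\dots,n\}$, $V_\sigma$ is the submodule generated by the $v_i$ with $i\notin\sigma$. $F\in\mathrm{Hom}_R(V,N)$ is a code of distance $w$ if $F(V_\sigma)=N$ for every $\sigma\subset[n]$ with $|\sigma|<w$. *)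

theory Defs
  imports "HOL-Probability.Probability" "HOL-Computational_Algebra.Fraction_Field"
    "HOL-Computational_Algebra.Polynomial" "HOL-Library.Function_Algebras"
begin

definition is_ideal :: "'a::comm_ring_1 set \<Rightarrow> bool" where
  "is_ideal I \<longleftrightarrow> 0 \<in> I \<and> (\<forall>x\<in>I. \<forall>y\<in>I. x + y \<in> I) \<and> (\<forall>r. \<forall>x\<in>I. r * x \<in> I)"

definition is_prime_ideal :: "'a::comm_ring_1 set \<Rightarrow> bool" where
  "is_prime_ideal P \<longleftrightarrow> is_ideal P \<and> P \<noteq> UNIV \<and> (\<forall>x y. x * y \<in> P \<longrightarrow> x \<in> P \<or> y \<in> P)"

definition is_maximal_ideal :: "'a::comm_ring_1 set \<Rightarrow> bool" where
  "is_maximal_ideal P \<longleftrightarrow> is_ideal P \<and> P \<noteq> UNIV \<and>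
     (\<forall>J. is_ideal J \<and> P \<subseteq> J \<longrightarrow> J = P \<or> J = UNIV)"

definition noetherian_ring :: "'a::comm_ring_1 itself \<Rightarrow> bool" where
  "noetherian_ring _ \<longleftrightarrow> (\<forall>I::'a set. is_ideal I \<longrightarrow>
     (\<exists>S. finite S \<and> I = {\<Sum>s\<in>S. c s * s | c. True}))"

definition integrally_closed :: "'a::idom itself \<Rightarrow> bool" where
  "integrally_closed _ \<longleftrightarrow> (\<forall>z::'a fract.
     (\<exists>p::'a poly. lead_coeff p = 1 \<and> poly (map_poly (\<lambda>c. Fract c 1) p) z = 0)
       \<longrightarrow> (\<exists>t. z = Fract t 1))"

definition dedekind_domain :: "'a::idom itself \<Rightarrow> bool" where
  "dedekind_domain T \<longleftrightarrow> noetherian_ring T \<and> integrally_closed T \<and>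
     (\<forall>P::'a set. is_prime_ideal P \<and> P \<noteq> {0} \<longrightarrow> is_maximal_ideal P)"

definition finite_quotient :: "'a::comm_ring_1 set \<Rightarrow> bool" where
  "finite_quotient J \<longleftrightarrow> finite ((\<lambda>x. {y. x - y \<in> J}) ` UNIV)"

(* R/I is an elementary abelian p-group (nontrivial, exponent p) *)
definition elem_abelian_quot :: "'a::comm_ring_1 set \<Rightarrow> nat \<Rightarrow> bool" where
  "elem_abelian_quot I p \<longleftrightarrow> is_ideal I \<and> prime p \<and> I \<noteq> UNIV \<and> of_nat p \<in> I"

(* preimage in R of a proper affine F_p-subspace of R/I: c + H with I \<subseteq> H \<subsetneq> R, H additive subgroup *)
definition proper_affine_preimage :: "'a::comm_ring_1 set \<Rightarrow> 'a set \<Rightarrow> bool" where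
  "proper_affine_preimage I S \<longleftrightarrow> (\<exists>c H. 0 \<in> H \<and> (\<forall>x\<in>H. \<forall>y\<in>H. x + y \<in> H \<and> - x \<in> H)
      \<and> I \<subseteq> H \<and> H \<noteq> UNIV \<and> S = (\<lambda>h. c + h) ` H)"

definition balanced_rv :: "'w measure \<Rightarrow> real \<Rightarrow> ('w \<Rightarrow> 'a::comm_ring_1) \<Rightarrow> bool" where
  "balanced_rv M \<epsilon> Y \<longleftrightarrow> Y \<in> measurable M (count_space UNIV) \<and>
     (\<forall>I p S. elem_abelian_quot I p \<and> proper_affine_preimage I S \<longrightarrow>
        measure M {\<omega>\<in>space M. Y \<omega> \<in> S} \<le> 1 - \<epsilon>)"

definition balanced_vec :: "'w measure \<Rightarrow> real \<Rightarrow> ('k \<Rightarrow> 'w \<Rightarrow> 'a::comm_ring_1) \<Rightarrow> bool" where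
  "balanced_vec M \<epsilon> X \<longleftrightarrow> prob_space.indep_vars M (\<lambda>_. count_space UNIV) X UNIV \<and>
     (\<forall>i. balanced_rv M \<epsilon> (X i))"

(* V_sigma: submodule generated by v_i, i \<notin> sigma *)
definition Vsub :: "'k set \<Rightarrow> ('k \<Rightarrow> 'a::comm_ring_1) set" where
  "Vsub \<sigma> = {x. \<forall>i\<in>\<sigma>. x i = 0}"

definition is_code :: "(('k::finite \<Rightarrow> 'a::comm_ring_1) \<Rightarrow> 'n) \<Rightarrow> real \<Rightarrow> bool" where
  "is_code F w \<longleftrightarrow> (\<forall>\<sigma>::'k set. real (card \<sigma>) < w \<longrightarrow> F ` Vsub \<sigma> = UNIV)"

end

theory Submission
  imports Defs
begin

primrec nmul :: "nat \<Rightarrow> 'a::ab_group_add \<Rightarrow> 'a" where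
  "nmul 0 x = 0"
| "nmul (Suc k) x = x + nmul k x"

lemma nmul_add: "nmul (a + b) x = nmul a x + nmul b x"
  by (induction a) (auto simp: add.assoc)

lemma nmul_plus: "nmul k (x + y) = nmul k x + nmul k y"
  by (induction k) (auto simp: algebra_simps)

lemma nmul_zero[simp]: "nmul k 0 = 0"
  by (induction k) auto

lemma nmul_mult: "nmul (a * b) x = nmul a (nmul b x)"
  by (induction a) (auto simp: nmul_add nmul_plus)

lemma nmul_one[simp]: "nmul 1 x = x"
  by simp

lemma nmul_diff: "a \<le> b \<Longrightarrow> nmul (b - a) x = nmul b x - nmul a x"
  by (metis add_diff_cancel_right' le_add_diff_inverse2 nmul_add)

lemma nmul_ring: "nmul k (x::'a::comm_ring_1) = of_nat k * x"
  by (induction k) (auto simp: algebra_simps)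

lemma nmul_order:
  fixes x :: "'a::ab_group_add"
  assumes fin: "finite (UNIV :: 'a set)"
  shows "\<exists>d. 0 < d \<and> d \<le> card (UNIV :: 'a set) \<and> nmul d x = 0"
proof -
  have "\<not> inj_on (\<lambda>k. nmul k x) {0..card (UNIV :: 'a set)}"
  proof
    assume "inj_on (\<lambda>k. nmul k x) {0..card (UNIV :: 'a set)}"
    then have "card {0..card (UNIV :: 'a set)} \<le> card (UNIV :: 'a set)"
      by (rule card_inj_on_le[OF _ subset_UNIV fin])
    then show False by simp
  qed
  then obtain a b where ab: "a \<le> card (UNIV :: 'a set)" "b \<le> card (UNIV :: 'a set)" "a \<noteq> b"
    "nmul a x = nmul b x"
    unfolding inj_on_def by auto
  show ?thesis
  proof (cases "a < b")
    case True
    then show ?thesis using ab nmul_diff[of a b x] by (intro exI[of _ "b - a"]) auto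
  next
    case False
    then show ?thesis using ab nmul_diff[of b a x] by (intro exI[of _ "a - b"]) auto
  qed
qed

lemma nmul_exponent:
  assumes fin: "finite (UNIV :: 'a::ab_group_add set)"
  shows "\<exists>c>0. \<forall>x::'a. nmul c x = 0"
proof (intro exI[of _ "fact (card (UNIV :: 'a set))"] conjI allI)
  show "0 < (fact (card (UNIV :: 'a set)) :: nat)" by simp
  fix x :: 'a
  obtain d where d: "0 < d" "d \<le> card (UNIV :: 'a set)" "nmul d x = 0"
    using nmul_order[OF fin] by blast
  then have "d dvd fact (card (UNIV :: 'a set))" by (intro dvd_fact) auto
  then obtain q where "fact (card (UNIV :: 'a set)) = q * d" by (metis dvd_def mult.commute)
  then show "nmul (fact (card (UNIV :: 'a set))) x = 0" by (simp add: nmul_mult d)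
qed

definition subgrp :: "'a::ab_group_add set \<Rightarrow> bool" where
  "subgrp H \<longleftrightarrow> 0 \<in> H \<and> (\<forall>x\<in>H. \<forall>y\<in>H. x + y \<in> H) \<and> (\<forall>x\<in>H. - x \<in> H)"

definition pchar :: "'a::ab_group_add set \<Rightarrow> ('a \<Rightarrow> complex) \<Rightarrow> bool" where
  "pchar H ch \<longleftrightarrow> ch 0 = 1 \<and> (\<forall>x\<in>H. \<forall>y\<in>H. ch (x + y) = ch x * ch y)"

lemma subgrp_add: "subgrp H \<Longrightarrow> x \<in> H \<Longrightarrow> y \<in> H \<Longrightarrow> x + y \<in> H"
  unfolding subgrp_def by simp

lemma subgrp_neg: "subgrp H \<Longrightarrow> x \<in> H \<Longrightarrow> - x \<in> H"
  unfolding subgrp_def by simp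

lemma subgrp_diff: "subgrp H \<Longrightarrow> x \<in> H \<Longrightarrow> y \<in> H \<Longrightarrow> x - y \<in> H"
  using subgrp_add[of H x "- y"] subgrp_neg[of H y] by simp

lemma subgrp_nmul: "subgrp H \<Longrightarrow> x \<in> H \<Longrightarrow> nmul k x \<in> H"
proof (induction k)
  case 0
  then show ?case unfolding subgrp_def by simp
next
  case (Suc k)
  then have "nmul k x \<in> H" by simp
  then show ?case using Suc.prems unfolding subgrp_def nmul.simps by simp
qed

lemma pchar_nmul: "subgrp H \<Longrightarrow> pchar H ch \<Longrightarrow> x \<in> H \<Longrightarrow> ch (nmul k x) = ch x ^ k"
proof (induction k)
  case 0
  then show ?case unfolding pchar_def by simp
next
  case (Suc k)
  have "nmul k x \<in> H" using subgrp_nmul[of H x k] Suc.prems by simp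
  then have "ch (x + nmul k x) = ch x * ch (nmul k x)" using Suc.prems unfolding pchar_def by simp
  then show ?case using Suc by simp
qed

lemma pchar_root:
  assumes fin: "finite (UNIV :: 'a::ab_group_add set)" and H: "subgrp (H :: 'a set)" and ch: "pchar H ch" and x: "x \<in> H"
  shows "\<exists>d>0. d \<le> card (UNIV :: 'a set) \<and> ch x ^ d = 1"
proof -
  from nmul_order[OF fin, of x] obtain d where d: "0 < d" "d \<le> card (UNIV :: 'a set)" "nmul d x = 0"
    by (elim exE conjE)
  have "ch x ^ d = ch (nmul d x)" by (rule pchar_nmul[OF H ch x, symmetric])
  also have "\<dots> = 1" using ch unfolding d(3) pchar_def by (elim conjE)
  finally have "ch x ^ d = 1" .
  then show ?thesis using d(1,2) by (intro exI[of _ d] conjI)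
qed

lemma root_norm:
  assumes a: "(z::complex) ^ d = 1" "d > 0"
  shows "norm z = 1"
proof -
  have "norm z ^ d = 1 ^ d" using a by (metis norm_one norm_power power_one)
  then show "norm z = 1" using power_eq_imp_eq_base[of "norm z" d 1] a(2) by simp
qed

lemma pchar_norm:
  assumes "finite (UNIV :: 'a::ab_group_add set)" "subgrp (H :: 'a set)" "pchar H ch" "x \<in> H"
  shows "norm (ch x) = 1"
  using pchar_root[OF assms] root_norm by blast

lemma subgrp_ext:
  fixes g :: "'a::ab_group_add"
  assumes H: "subgrp H" and c: "c > 0" "nmul c g = 0"
  shows "subgrp {h + nmul j g | h j. h \<in> H}"
  unfolding subgrp_def
proof (intro conjI ballI)
  have "(0::'a) = 0 + nmul 0 g" by simp
  moreover have "(0::'a) \<in> H" using H unfolding subgrp_def by simp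
  ultimately show "0 \<in> {h + nmul j g | h j. h \<in> H}" by blast
next
  fix x y assume "x \<in> {h + nmul j g | h j. h \<in> H}" "y \<in> {h + nmul j g | h j. h \<in> H}"
  then obtain h1 j1 h2 j2 where xy: "x = h1 + nmul j1 g" "y = h2 + nmul j2 g" "h1 \<in> H" "h2 \<in> H"
    by blast
  have "x + y = (h1 + h2) + nmul (j1 + j2) g" unfolding xy nmul_add by (simp add: algebra_simps)
  moreover have "h1 + h2 \<in> H" using subgrp_add[OF H xy(3,4)] .
  ultimately show "x + y \<in> {h + nmul j g | h j. h \<in> H}" by blast
next
  fix x assume "x \<in> {h + nmul j g | h j. h \<in> H}"
  then obtain h1 j1 where x: "x = h1 + nmul j1 g" "h1 \<in> H" by blast
  have cj: "(c - 1) * j1 + j1 = c * j1" using c by (metis Suc_diff_1 mult_Suc add.commute)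
  have "nmul ((c - 1) * j1) g + nmul j1 g = nmul (c * j1) g"
    by (simp only: nmul_add[symmetric] cj)
  also have "\<dots> = nmul j1 (nmul c g)" by (simp only: mult.commute[of c j1] nmul_mult)
  also have "\<dots> = 0" by (simp only: c(2) nmul_zero)
  finally have "nmul ((c - 1) * j1) g = - nmul j1 g" by (simp only: eq_neg_iff_add_eq_0)
  then have "- x = - h1 + nmul ((c - 1) * j1) g" unfolding x(1) by (simp add: algebra_simps)
  moreover have "- h1 \<in> H" using subgrp_neg[OF H x(2)] .
  ultimately show "- x \<in> {h + nmul j g | h j. h \<in> H}" by blast
qed

lemma ext_step:
  fixes g :: "'a::ab_group_add"
  assumes H: "subgrp H" and ch: "pchar H ch" and k: "k > 0" "nmul k g \<in> H"
    and kmin: "\<And>j. 0 < j \<Longrightarrow> j < k \<Longrightarrow> nmul j g \<notin> H"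
    and z: "z ^ k = ch (nmul k g)"
  shows "\<exists>ch'. pchar {h + nmul j g | h j. h \<in> H} ch' \<and> (\<forall>x\<in>H. ch' x = ch x) \<and> ch' g = z"
proof -
  have uniq0: "r1 = r2 \<and> h1 = h2" if "h1 \<in> H" "h2 \<in> H" "r1 \<le> r2" "r2 < k"
    "h1 + nmul r1 g = h2 + nmul r2 g" for h1 h2 r1 r2
  proof -
    from that(5) have "h1 = h2 + nmul r2 g - nmul r1 g" by (simp add: eq_diff_eq)
    then have "h1 + - h2 = nmul r2 g - nmul r1 g" by (simp add: algebra_simps)
    then have "nmul (r2 - r1) g = h1 + - h2" using nmul_diff[of r1 r2 g] that(3) by simp
    moreover have "h1 + - h2 \<in> H" using subgrp_diff[OF H that(1,2)] by simp
    ultimately have "\<not> (0 < r2 - r1 \<and> r2 - r1 < k)" using kmin by metis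
    then have "r1 = r2" using that by auto
    then show ?thesis using that by simp
  qed
  have uniq: "r1 = r2 \<and> h1 = h2" if "h1 \<in> H" "h2 \<in> H" "r1 < k" "r2 < k"
    "h1 + nmul r1 g = h2 + nmul r2 g" for h1 h2 r1 r2
    using uniq0[of h1 h2 r1 r2] uniq0[of h2 h1 r2 r1] that by (cases "r1 \<le> r2") auto
  have repr: "h + nmul j g = (h + nmul (j div k) (nmul k g)) + nmul (j mod k) g" for h j
  proof -
    have "nmul j g = nmul ((j div k) * k) g + nmul (j mod k) g"
      by (simp add: nmul_add[symmetric])
    then show ?thesis by (simp add: nmul_mult add.assoc)
  qed
  define P where "P x p \<longleftrightarrow> fst p \<in> H \<and> snd p < k \<and> x = fst p + nmul (snd p) g" for x p
  define ch' where "ch' x = (let p = (SOME p. P x p) in ch (fst p) * z ^ snd p)" for x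
  have key: "ch' (h + nmul r g) = ch h * z ^ r" if "h \<in> H" "r < k" for h r
  proof -
    have ex: "P (h + nmul r g) (h, r)" using that by (simp add: P_def)
    let ?p = "SOME p. P (h + nmul r g) p"
    have "P (h + nmul r g) ?p" using someI[of "P (h + nmul r g)" "(h, r)", OF ex] .
    then have "fst ?p = h \<and> snd ?p = r" using uniq[of "fst ?p" h "snd ?p" r] that by (auto simp: P_def)
    then show ?thesis by (simp add: ch'_def Let_def)
  qed
  have key2: "ch' (h + nmul j g) = ch h * z ^ j" if "h \<in> H" for h j
  proof -
    have "nmul (j div k) (nmul k g) \<in> H" using subgrp_nmul[OF H k(2)] by simp
    then have hin: "h + nmul (j div k) (nmul k g) \<in> H" using subgrp_add[OF H that] by simp
    have "ch' (h + nmul j g) = ch (h + nmul (j div k) (nmul k g)) * z ^ (j mod k)"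
      using key[OF hin, of "j mod k"] k by (subst repr[of h j]) simp
    also have "ch (h + nmul (j div k) (nmul k g)) = ch h * ch (nmul k g) ^ (j div k)"
    proof -
      have "nmul (j div k) (nmul k g) \<in> H" using subgrp_nmul[OF H k(2)] by simp
      then have "ch (h + nmul (j div k) (nmul k g)) = ch h * ch (nmul (j div k) (nmul k g))"
        using ch that unfolding pchar_def by simp
      then show ?thesis using pchar_nmul[OF H ch k(2)] by simp
    qed
    also have "ch (nmul k g) ^ (j div k) = z ^ (k * (j div k))" by (simp add: z power_mult)
    finally show ?thesis by (simp add: mult.assoc power_add[symmetric])
  qed
  have "pchar {h + nmul j g | h j. h \<in> H} ch'"
    unfolding pchar_def
  proof (intro conjI ballI)
    show "ch' 0 = 1" using key2[of 0 0] H ch by (simp add: subgrp_def pchar_def)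
  next
    fix x y assume "x \<in> {h + nmul j g | h j. h \<in> H}" "y \<in> {h + nmul j g | h j. h \<in> H}"
    then obtain h1 j1 h2 j2 where xy: "x = h1 + nmul j1 g" "y = h2 + nmul j2 g" "h1 \<in> H" "h2 \<in> H" by blast
    have "x + y = (h1 + h2) + nmul (j1 + j2) g" using xy by (simp add: nmul_add algebra_simps)
    moreover have "h1 + h2 \<in> H" using subgrp_add[OF H xy(3,4)] .
    ultimately have "ch' (x + y) = ch (h1 + h2) * z ^ (j1 + j2)" using key2 by simp
    also have "\<dots> = (ch h1 * z ^ j1) * (ch h2 * z ^ j2)" using ch xy by (simp add: pchar_def power_add)
    also have "\<dots> = ch' x * ch' y" using key2 xy by simp
    finally show "ch' (x + y) = ch' x * ch' y" .
  qed
  moreover have "\<forall>x\<in>H. ch' x = ch x" using key2[of _ 0] by simp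
  moreover have "ch' g = z" using key2[of 0 1] H ch by (simp add: subgrp_def pchar_def)
  ultimately show ?thesis by blast
qed

lemma complex_root_ex:
  assumes "(w::complex) \<noteq> 0" "k > 0"
  shows "\<exists>z. z ^ k = w"
proof -
  have "exp (Ln w / of_nat k) ^ k = exp (of_nat k * (Ln w / of_nat k))"
    by (rule exp_of_nat_mult[symmetric])
  also have "\<dots> = exp (Ln w)" using assms(2) by simp
  also have "\<dots> = w" using assms(1) by simp
  finally show ?thesis by blast
qed

lemma pchar_nonzero:
  fixes H :: "'a::ab_group_add set"
  assumes fin: "finite (UNIV :: 'a set)" and H: "subgrp H" and ch: "pchar H ch" and x: "x \<in> H"
  shows "ch x \<noteq> 0"
  using pchar_norm[OF fin H ch x] by auto

lemma ext_full:
  fixes H :: "'a::ab_group_add set"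
  assumes fin: "finite (UNIV :: 'a set)"
  shows "subgrp H \<Longrightarrow> pchar H ch \<Longrightarrow> \<exists>ch'. pchar UNIV ch' \<and> (\<forall>x\<in>H. ch' x = ch x)"
proof (induction "card (UNIV - H)" arbitrary: H ch rule: less_induct)
  case less
  show ?case
  proof (cases "H = UNIV")
    case True
    then show ?thesis using less.prems by auto
  next
    case False
    then obtain g where g: "g \<notin> H" by auto
    obtain c where c: "c > 0" "\<And>x::'a. nmul c x = 0" using nmul_exponent[OF fin] by blast
    define k where "k = (LEAST k. 0 < k \<and> nmul k g \<in> H)"
    have ex: "0 < c \<and> nmul c g \<in> H" using c less.prems(1) by (simp add: subgrp_def)
    have k: "0 < k" "nmul k g \<in> H"
      using LeastI[of "\<lambda>k. 0 < k \<and> nmul k g \<in> H" c, OF ex] unfolding k_def by simp_all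
    have kmin: "nmul j g \<notin> H" if "0 < j" "j < k" for j
      using not_less_Least[of j "\<lambda>k. 0 < k \<and> nmul k g \<in> H"] that unfolding k_def by blast
    have "ch (nmul k g) \<noteq> 0" by (rule pchar_nonzero[OF fin less.prems k(2)])
    then obtain z where z: "z ^ k = ch (nmul k g)" using complex_root_ex k(1) by blast
    define H' where "H' = {h + nmul j g | h j. h \<in> H}"
    obtain ch2 where ch2: "pchar H' ch2" "\<forall>x\<in>H. ch2 x = ch x"
      using ext_step[OF less.prems k kmin z] unfolding H'_def by blast
    have H'sub: "subgrp H'" unfolding H'_def by (rule subgrp_ext[OF less.prems(1) c(1) c(2)])
    have "H \<subseteq> H'"
    proof
      fix h assume h: "h \<in> H"
      have "h = h + nmul 0 g" by simp
      then show "h \<in> H'" unfolding H'_def using h by blast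
    qed
    moreover have "g \<in> H'"
    proof -
      have "g = 0 + nmul 1 g" by simp
      moreover have "(0::'a) \<in> H" using less.prems(1) unfolding subgrp_def by simp
      ultimately show ?thesis unfolding H'_def by blast
    qed
    ultimately have "UNIV - H' \<subset> UNIV - H" using g by blast
    then have "card (UNIV - H') < card (UNIV - H)" using fin by (meson finite_Diff psubset_card_mono)
    from less.hyps[OF this H'sub ch2(1)] obtain ch3 where "pchar UNIV ch3" "\<forall>x\<in>H'. ch3 x = ch2 x"
      by blast
    then show ?thesis using ch2(2) \<open>H \<subseteq> H'\<close> by (intro exI[of _ ch3]) auto
  qed
qed

lemma separate:
  fixes y :: "'a::ab_group_add"
  assumes fin: "finite (UNIV :: 'a set)" and y: "y \<noteq> 0"
  shows "\<exists>ch. pchar UNIV ch \<and> ch y \<noteq> 1"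
proof -
  have H0: "subgrp {0::'a}" by (simp add: subgrp_def)
  have ch0: "pchar {0::'a} (\<lambda>_. 1)" by (simp add: pchar_def)
  obtain c where c: "c > 0" "\<And>x::'a. nmul c x = 0" using nmul_exponent[OF fin] by blast
  define k where "k = (LEAST k. 0 < k \<and> nmul k y \<in> {0})"
  have ex: "0 < c \<and> nmul c y \<in> {0}" using c by simp
  have k: "0 < k" "nmul k y \<in> {0}"
    using LeastI[of "\<lambda>k. 0 < k \<and> nmul k y \<in> {0}" c, OF ex] unfolding k_def by simp_all
  have kmin: "nmul j y \<notin> {0}" if "0 < j" "j < k" for j
    using not_less_Least[of j "\<lambda>k. 0 < k \<and> nmul k y \<in> {0}"] that unfolding k_def by blast
  have "k \<noteq> 1" using k y by auto
  then have k2: "k \<ge> 2" using k(1) by linarith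
  have "\<exists>z::complex. z ^ k = 1 \<and> z \<noteq> 1"
  proof (rule ccontr)
    assume "\<not> ?thesis"
    then have "{z::complex. z ^ k = 1} \<subseteq> {1}" by auto
    then have "card {z::complex. z ^ k = 1} \<le> card {1::complex}" by (intro card_mono) auto
    then have "card {z::complex. z ^ k = 1} \<le> 1" by simp
    then show False using card_roots_unity_eq[OF k(1)] k2 by simp
  qed
  then obtain z :: complex where z: "z ^ k = 1" "z \<noteq> 1" by blast
  have z': "z ^ k = (\<lambda>_. 1) (nmul k y)" using z by simp
  define H' where "H' = {h + nmul j y | h j. h \<in> {0::'a}}"
  obtain ch2 where ch2: "pchar H' ch2" "ch2 y = z"
    using ext_step[OF H0 ch0 k kmin z'] unfolding H'_def by blast
  have H'sub: "subgrp H'" unfolding H'_def by (rule subgrp_ext[OF H0 c(1) c(2)])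
  obtain ch3 where ch3: "pchar UNIV ch3" "\<forall>x\<in>H'. ch3 x = ch2 x"
    using ext_full[OF fin H'sub ch2(1)] by blast
  have "y = 0 + nmul 1 y" by simp
  then have "y \<in> H'" unfolding H'_def by blast
  then have "ch3 y = z" using ch3 ch2 by simp
  then show ?thesis using ch3 z by blast
qed

definition chars :: "('a::ab_group_add \<Rightarrow> complex) set" where
  "chars = {ch. pchar UNIV ch}"

lemma subgrp_UNIV: "subgrp UNIV" by (simp add: subgrp_def)

lemma chars_mult: "pchar UNIV ch \<Longrightarrow> ch (x + y) = ch x * ch y"
  unfolding pchar_def by simp

lemma chars_zero: "pchar UNIV ch \<Longrightarrow> ch 0 = 1"
  unfolding pchar_def by simp

lemma chars_neg:
  assumes "pchar UNIV (ch :: 'a::ab_group_add \<Rightarrow> complex)"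
  shows "ch x * ch (- x) = 1"
  using chars_mult[OF assms, of x "- x"] chars_zero[OF assms] by simp

lemma finite_chars:
  assumes fin: "finite (UNIV :: 'a::ab_group_add set)"
  shows "finite (chars :: ('a \<Rightarrow> complex) set)"
proof -
  obtain c where c: "c > 0" "\<And>x::'a. nmul c x = 0" using nmul_exponent[OF fin] by blast
  have "chars \<subseteq> PiE (UNIV :: 'a set) (\<lambda>_. {z::complex. z ^ c = 1})"
  proof
    fix ch :: "'a \<Rightarrow> complex" assume "ch \<in> chars"
    then have ch: "pchar UNIV ch" unfolding chars_def by simp
    have "ch x ^ c = 1" for x
      using pchar_nmul[OF subgrp_UNIV ch, of x c] c(2)[of x] chars_zero[OF ch] by simp
    then show "ch \<in> PiE (UNIV :: 'a set) (\<lambda>_. {z::complex. z ^ c = 1})"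
      by (simp add: PiE_UNIV_domain)
  qed
  moreover have "finite (PiE (UNIV :: 'a set) (\<lambda>_. {z::complex. z ^ c = 1}))"
    using fin c(1) by (intro finite_PiE) auto
  ultimately show ?thesis by (rule finite_subset)
qed

lemma sum_chars_nonzero:
  fixes y :: "'a::ab_group_add"
  assumes fin: "finite (UNIV :: 'a set)" and y: "y \<noteq> 0"
  shows "(\<Sum>ch\<in>chars. ch y) = 0"
proof -
  obtain ch0 where ch0: "pchar UNIV ch0" "ch0 y \<noteq> 1" using separate[OF fin y] by blast
  define i where "i ch = (\<lambda>x. ch0 x * ch x)" for ch :: "'a \<Rightarrow> complex"
  define j where "j ch = (\<lambda>x. ch0 (- x) * ch x)" for ch :: "'a \<Rightarrow> complex"
  have ichar: "i ch \<in> chars" if "ch \<in> chars" for ch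
    using that ch0(1) unfolding chars_def pchar_def i_def by (simp add: algebra_simps)
  have jchar: "j ch \<in> chars" if "ch \<in> chars" for ch
  proof -
    have ch: "pchar UNIV ch" using that unfolding chars_def by simp
    have "ch0 (- (x + y)) = ch0 (- x) * ch0 (- y)" for x y
      using chars_mult[OF ch0(1), of "- x" "- y"] by (simp add: add.commute)
    then show ?thesis using chars_mult[OF ch] chars_zero[OF ch] chars_zero[OF ch0(1)]
      unfolding chars_def pchar_def j_def by (simp add: algebra_simps)
  qed
  have ij: "i (j ch) = ch" for ch
    unfolding i_def j_def using chars_neg[OF ch0(1)] by (simp add: mult.assoc[symmetric])
  have ji: "j (i ch) = ch" for ch
  proof -
    have "ch0 (- x) * ch0 x = 1" for x using chars_neg[OF ch0(1), of "- x"] by simp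
    then show ?thesis unfolding i_def j_def by (simp add: mult.assoc[symmetric])
  qed
  have "(\<Sum>ch\<in>chars. ch y) = (\<Sum>ch\<in>chars. i ch y)"
    by (rule sum.reindex_bij_witness[of _ i j]) (auto simp: ij ji ichar jchar)
  also have "\<dots> = ch0 y * (\<Sum>ch\<in>chars. ch y)" unfolding i_def by (simp add: sum_distrib_left)
  finally have "(1 - ch0 y) * (\<Sum>ch\<in>chars. ch y) = 0" by (simp add: algebra_simps)
  then show ?thesis using ch0(2) by simp
qed

lemma sum_char_nontriv:
  fixes ch :: "'a::ab_group_add \<Rightarrow> complex"
  assumes fin: "finite (UNIV :: 'a set)" and ch: "pchar UNIV ch" and g: "ch g \<noteq> 1"
  shows "(\<Sum>x\<in>UNIV. ch x) = 0"
proof -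
  have "(\<Sum>x\<in>UNIV. ch x) = (\<Sum>x\<in>UNIV. ch (x + g))"
    by (rule sum.reindex_bij_witness[of _ "\<lambda>x. x + g" "\<lambda>x. x - g"]) auto
  also have "\<dots> = ch g * (\<Sum>x\<in>UNIV. ch x)"
    using chars_mult[OF ch] by (simp add: sum_distrib_left mult.commute)
  finally have "(1 - ch g) * (\<Sum>x\<in>UNIV. ch x) = 0" by (simp add: algebra_simps)
  then show ?thesis using g by simp
qed

lemma one_char: "(\<lambda>_. 1) \<in> chars"
  unfolding chars_def pchar_def by simp

lemma card_chars:
  assumes fin: "finite (UNIV :: 'a::ab_group_add set)"
  shows "card (chars :: ('a \<Rightarrow> complex) set) = card (UNIV :: 'a set)"
proof -
  have fc: "finite (chars :: ('a \<Rightarrow> complex) set)" by (rule finite_chars[OF fin])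
  have "(\<Sum>y\<in>(UNIV::'a set). \<Sum>ch\<in>chars. ch y) = (\<Sum>y\<in>(UNIV::'a set). if y = 0 then of_nat (card (chars :: ('a \<Rightarrow> complex) set)) else 0)"
  proof (rule sum.cong[OF refl])
    fix y :: 'a
    show "(\<Sum>ch\<in>chars. ch y) = (if y = 0 then of_nat (card (chars :: ('a \<Rightarrow> complex) set)) else 0)"
    proof (cases "y = 0")
      case True
      have "(\<Sum>ch\<in>chars. ch y) = (\<Sum>ch\<in>(chars :: ('a \<Rightarrow> complex) set). 1)"
        using True by (intro sum.cong) (auto simp: chars_def pchar_def)
      then show ?thesis using True by simp
    next
      case False
      then show ?thesis using sum_chars_nonzero[OF fin False] by simp
    qed
  qed
  also have "\<dots> = of_nat (card (chars :: ('a \<Rightarrow> complex) set))"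
    using fin by (simp add: sum.delta)
  finally have A: "(\<Sum>y\<in>(UNIV::'a set). \<Sum>ch\<in>chars. ch y) = of_nat (card (chars :: ('a \<Rightarrow> complex) set))" .
  have "(\<Sum>y\<in>(UNIV::'a set). \<Sum>ch\<in>chars. ch y) = (\<Sum>ch\<in>(chars :: ('a \<Rightarrow> complex) set). \<Sum>y\<in>UNIV. ch y)"
    by (rule sum.swap)
  also have "\<dots> = (\<Sum>ch\<in>(chars :: ('a \<Rightarrow> complex) set). if ch = (\<lambda>_. 1) then of_nat (card (UNIV :: 'a set)) else 0)"
  proof (rule sum.cong[OF refl])
    fix ch :: "'a \<Rightarrow> complex" assume "ch \<in> chars"
    then have ch: "pchar UNIV ch" unfolding chars_def by simp
    show "(\<Sum>y\<in>UNIV. ch y) = (if ch = (\<lambda>_. 1) then of_nat (card (UNIV :: 'a set)) else 0)"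
    proof (cases "ch = (\<lambda>_. 1)")
      case True
      then show ?thesis by simp
    next
      case False
      then obtain g where "ch g \<noteq> 1" by auto
      then show ?thesis using sum_char_nontriv[OF fin ch] False by simp
    qed
  qed
  also have "\<dots> = of_nat (card (UNIV :: 'a set))"
    using sum.delta[OF fc, of "\<lambda>_. (1::complex)" "\<lambda>_. (of_nat (card (UNIV :: 'a set)) :: complex)"] by (simp add: one_char)
  finally show ?thesis using A by simp
qed

lemma char_inversion:
  fixes y :: "'a::ab_group_add"
  assumes fin: "finite (UNIV :: 'a set)"
  shows "(\<Sum>ch\<in>chars. ch y) / of_nat (card (UNIV :: 'a set)) = (if y = 0 then 1 else 0)"
proof (cases "y = 0")
  case True
  have "(\<Sum>ch\<in>chars. ch y) = (\<Sum>ch\<in>(chars :: ('a \<Rightarrow> complex) set). 1)"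
    using True by (intro sum.cong) (auto simp: chars_def pchar_def)
  then show ?thesis using True card_chars[OF fin] fin by simp
next
  case False
  then show ?thesis using sum_chars_nonzero[OF fin False] by simp
qed

lemma norm1_sq: "norm (w::complex) = 1 \<Longrightarrow> (cmod (1 - w))\<^sup>2 = 2 - 2 * Re w"
proof -
  assume w: "norm w = 1"
  have "(cmod w)\<^sup>2 = 1" using w by simp
  then have e: "(Re w)\<^sup>2 + (Im w)\<^sup>2 = 1" by (simp add: cmod_power2)
  have "(cmod (1 - w))\<^sup>2 = (1 - Re w)\<^sup>2 + (Im w)\<^sup>2" by (simp add: cmod_power2)
  also have "\<dots> = 2 - 2 * Re w" using e by (simp add: power2_eq_square algebra_simps)
  finally show ?thesis .
qed

lemma norm_one_minus_pow:
  assumes "norm (z::complex) = 1"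
  shows "cmod (1 - z ^ j) \<le> real j * cmod (1 - z)"
proof (induction j)
  case 0
  then show ?case by simp
next
  case (Suc j)
  have "1 - z ^ Suc j = (1 - z ^ j) + z ^ j * (1 - z)" by (simp add: algebra_simps)
  then have "cmod (1 - z ^ Suc j) \<le> cmod (1 - z ^ j) + cmod (z ^ j * (1 - z))"
    by (metis norm_triangle_ineq)
  also have "cmod (z ^ j * (1 - z)) = cmod (1 - z)" using assms by (simp add: norm_mult norm_power)
  finally show ?case using Suc.IH by (simp add: algebra_simps)
qed

lemma sum_sq_bound: "(\<Sum>j<d. (real j)\<^sup>2) \<le> (real d) ^ 3 / 3"
proof (induction d)
  case 0
  then show ?case by simp
next
  case (Suc d)
  have "(\<Sum>j<Suc d. (real j)\<^sup>2) = (\<Sum>j<d. (real j)\<^sup>2) + (real d)\<^sup>2" by simp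
  also have "\<dots> \<le> (real d) ^ 3 / 3 + (real d)\<^sup>2" using Suc.IH by simp
  also have "\<dots> \<le> (real (Suc d)) ^ 3 / 3" by (simp add: power2_eq_square power3_eq_cube algebra_simps)
  finally show ?case .
qed

lemma root_gap:
  assumes z: "(z::complex) ^ d = 1" "z \<noteq> 1" and d: "d > 0"
  shows "3 / (real d)\<^sup>2 \<le> 1 - Re z"
proof -
  have nz: "norm z = 1" using root_norm z(1) d by blast
  have nzj: "norm (z ^ j) = 1" for j using nz by (simp add: norm_power)
  have tm: "1 - Re (z ^ j) \<le> (real j)\<^sup>2 * (1 - Re z)" for j
  proof -
    have "cmod (1 - z ^ j) \<le> real j * cmod (1 - z)" by (rule norm_one_minus_pow[OF nz])
    then have "(cmod (1 - z ^ j))\<^sup>2 \<le> (real j * cmod (1 - z))\<^sup>2"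
      by (intro power_mono) auto
    then have "2 - 2 * Re (z ^ j) \<le> (real j)\<^sup>2 * (2 - 2 * Re z)"
      using norm1_sq[OF nzj[of j]] norm1_sq[OF nz] by (simp add: power_mult_distrib)
    then show ?thesis by (simp add: algebra_simps)
  qed
  have "(\<Sum>j<d. z ^ j) = (z ^ d - 1) / (z - 1)" by (rule geometric_sum[OF z(2)])
  then have gs: "(\<Sum>j<d. z ^ j) = 0" using z(1) by simp
  have "(\<Sum>j<d. 1 - Re (z ^ j)) = real d - Re (\<Sum>j<d. z ^ j)"
    by (simp add: sum_subtractf)
  then have "real d = (\<Sum>j<d. 1 - Re (z ^ j))" using gs by simp
  also have "\<dots> \<le> (\<Sum>j<d. (real j)\<^sup>2 * (1 - Re z))" by (intro sum_mono tm)
  also have "\<dots> = (\<Sum>j<d. (real j)\<^sup>2) * (1 - Re z)" by (simp add: sum_distrib_right)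
  also have "\<dots> \<le> (real d) ^ 3 / 3 * (1 - Re z)"
  proof (rule mult_right_mono[OF sum_sq_bound])
    have "Re z \<le> cmod z" by (rule complex_Re_le_cmod)
    then show "0 \<le> 1 - Re z" using nz by simp
  qed
  finally have "real d \<le> (real d) ^ 3 / 3 * (1 - Re z)" .
  then have "3 * real d \<le> real d * ((real d)\<^sup>2 * (1 - Re z))"
    by (simp add: power3_eq_cube power2_eq_square algebra_simps)
  then have "3 \<le> (real d)\<^sup>2 * (1 - Re z)" using d by simp
  then show ?thesis using d by (simp add: divide_le_eq mult.commute)
qed

lemma pchar_ofnat:
  fixes psi :: "'r::comm_ring_1 \<Rightarrow> complex"
  assumes psi: "pchar UNIV psi"
  shows "psi (of_nat k * t) = psi t ^ k"
  using pchar_nmul[OF subgrp_UNIV psi, of t k] by (simp add: nmul_ring)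

lemma pchar_neg1:
  fixes psi :: "'r::ab_group_add \<Rightarrow> complex"
  assumes psi: "pchar UNIV psi" and "psi a = 1"
  shows "psi (- a) = 1"
  using chars_neg[OF psi, of a] assms(2) by simp

lemma char_bound:
  fixes psi :: "'r::comm_ring_1 \<Rightarrow> complex" and p :: "'r \<Rightarrow> real"
  assumes fin: "finite (UNIV :: 'r set)" and psi: "pchar UNIV psi" and t0: "psi t0 \<noteq> 1"
    and p0: "\<And>r. p r \<ge> 0" and p1: "(\<Sum>r\<in>UNIV. p r) = 1"
    and bal: "\<And>I q S. elem_abelian_quot I q \<Longrightarrow> proper_affine_preimage I S \<Longrightarrow> (\<Sum>r\<in>S. p r) \<le> 1 - \<epsilon>"
  shows "norm (\<Sum>r\<in>UNIV. complex_of_real (p r) * psi r) \<le> exp (- \<epsilon> / (real (card (UNIV :: 'r set)))\<^sup>2)"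
proof -
  define M where "M = card (UNIV :: 'r set)"
  have M0: "M > 0" unfolding M_def using fin by (simp add: card_gt_0_iff)
  obtain c where c: "c > 0" "\<And>x::'r. nmul c x = 0" using nmul_exponent[OF fin] by blast
  have ofc: "(of_nat c :: 'r) = 0" using c(2)[of 1] by (simp add: nmul_ring)
  define P where "P m \<longleftrightarrow> 0 < m \<and> (\<forall>t. psi (of_nat m * t) = 1)" for m
  define m where "m = (LEAST m. P m)"
  have Pc: "P c" unfolding P_def using c(1) ofc chars_zero[OF psi] by simp
  have Pm: "P m" unfolding m_def using LeastI[of P c, OF Pc] .
  have mmin: "\<not> P j" if "j < m" for j using not_less_Least[of j P] that unfolding m_def by blast
  have m0: "m > 0" using Pm unfolding P_def by simp
  have "m \<noteq> 1"
  proof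
    assume "m = 1"
    then have "psi t0 = 1" using Pm unfolding P_def by (metis mult_1 of_nat_1)
    then show False using t0 by simp
  qed
  then obtain pr where pr: "prime pr" "pr dvd m" using prime_factor_nat by blast
  then obtain q where q: "m = q * pr" by (metis dvd_def mult.commute)
  have pr2: "pr \<ge> 2" using pr(1) by (simp add: prime_ge_2_nat)
  have q0: "q > 0" using m0 q by (metis gr0I mult_is_0)
  have qm: "q < m" using q pr2 q0 by simp
  have "\<not> P q" using mmin[OF qm] .
  then obtain t1 where t1: "psi (of_nat q * t1) \<noteq> 1" using q0 unfolding P_def by blast
  define K where "K = {t. psi (of_nat q * t) = 1}"
  define I where "I = {t. \<forall>s. psi (of_nat q * (s * t)) = 1}"
  have Kadd: "x + y \<in> K" if "x \<in> K" "y \<in> K" for x y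
    using that chars_mult[OF psi, of "of_nat q * x" "of_nat q * y"] unfolding K_def by (simp add: algebra_simps)
  have Kneg: "- x \<in> K" if "x \<in> K" for x
    using that pchar_neg1[OF psi, of "of_nat q * x"] unfolding K_def by simp
  have K0: "0 \<in> K" unfolding K_def using chars_zero[OF psi] by simp
  have IK: "I \<subseteq> K" unfolding I_def K_def by (auto dest: spec[of _ 1])
  have KU: "K \<noteq> UNIV" using t1 unfolding K_def by auto
  have ideal: "is_ideal I"
    unfolding is_ideal_def
  proof (intro conjI ballI allI)
    show "0 \<in> I" unfolding I_def using chars_zero[OF psi] by simp
  next
    fix x y assume "x \<in> I" "y \<in> I"
    then show "x + y \<in> I" unfolding I_def
      using chars_mult[OF psi] by (simp add: algebra_simps)
  next
    fix r x assume x: "x \<in> I"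
    show "r * x \<in> I" unfolding I_def
    proof (rule CollectI, rule allI)
      fix s
      have "psi (of_nat q * ((s * r) * x)) = 1" using x unfolding I_def by blast
      then show "psi (of_nat q * (s * (r * x))) = 1" by (simp add: mult.assoc)
    qed
  qed
  have IU: "I \<noteq> UNIV"
  proof
    assume "I = UNIV"
    then have "1 \<in> I" by simp
    then have "psi (of_nat q * (t1 * 1)) = 1" unfolding I_def by blast
    then show False using t1 by simp
  qed
  have pI: "of_nat pr \<in> I"
  proof -
    have "of_nat q * (s * of_nat pr) = of_nat m * (s :: 'r)" for s
      using q by (simp add: algebra_simps)
    then show ?thesis unfolding I_def using Pm unfolding P_def by simp
  qed
  have eaq: "elem_abelian_quot I pr" unfolding elem_abelian_quot_def using ideal pr(1) IU pI by simp
  have cos: "(\<Sum>r\<in>{r. r - s \<in> K}. p r) \<le> 1 - \<epsilon>" for s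
  proof -
    have "proper_affine_preimage I ((\<lambda>h. s + h) ` K)"
      unfolding proper_affine_preimage_def using K0 Kadd Kneg IK KU by blast
    moreover have "(\<lambda>h. s + h) ` K = {r. r - s \<in> K}"
      by (auto simp: image_iff intro: exI[of _ "_ - s"]) (metis add.commute diff_add_cancel)
    ultimately show ?thesis using bal[OF eaq] by metis
  qed
  define gam where "gam = 2 / (real M)\<^sup>2"
  have gam0: "gam \<ge> 0" unfolding gam_def by simp
  have offK: "\<epsilon> \<le> (\<Sum>r\<in>UNIV. if r - s \<in> K then 0 else p r)" for s
  proof -
    have "(\<Sum>r\<in>UNIV. p r) = (\<Sum>r\<in>UNIV. if r - s \<in> K then p r else 0) + (\<Sum>r\<in>UNIV. if r - s \<in> K then 0 else p r)"
      by (simp add: sum.distrib[symmetric] if_distrib cong: if_cong)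
    moreover have "(\<Sum>r\<in>UNIV. if r - s \<in> K then p r else 0) = (\<Sum>r\<in>{r. r - s \<in> K}. p r)"
      using sum.inter_filter[OF fin, of p "\<lambda>r. r - s \<in> K"] by simp
    ultimately show ?thesis using cos[of s] p1 by linarith
  qed
  have reb: "Re (psi u) \<le> 1 - (if u \<in> K then 0 else gam)" for u
  proof (cases "u \<in> K")
    case True
    have "Re (psi u) \<le> cmod (psi u)" by (rule complex_Re_le_cmod)
    then show ?thesis using True pchar_norm[OF fin subgrp_UNIV psi, of u] by simp
  next
    case False
    have "psi u \<noteq> 1"
    proof
      assume "psi u = 1"
      then have "u \<in> K" unfolding K_def using pchar_ofnat[OF psi, of q u] by simp
      then show False using False by simp
    qed
    moreover obtain d where d: "d > 0" "d \<le> M" "psi u ^ d = 1"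
      using pchar_root[OF fin subgrp_UNIV psi, of u] unfolding M_def by blast
    ultimately have "3 / (real d)\<^sup>2 \<le> 1 - Re (psi u)" using root_gap by blast
    moreover have "gam \<le> 3 / (real d)\<^sup>2"
    proof -
      have "(real d)\<^sup>2 \<le> (real M)\<^sup>2" using d by (intro power_mono) auto
      then have "2 / (real M)\<^sup>2 \<le> 2 / (real d)\<^sup>2" using d by (intro divide_left_mono) auto
      also have "\<dots> \<le> 3 / (real d)\<^sup>2" by (intro divide_right_mono) auto
      finally show ?thesis unfolding gam_def .
    qed
    ultimately show ?thesis using False by simp
  qed
  define phi where "phi = (\<Sum>r\<in>UNIV. complex_of_real (p r) * psi r)"
  have cnjpsi: "cnj (psi s) = psi (- s)" for s
  proof -
    have n: "cmod (psi s) = 1" using pchar_norm[OF fin subgrp_UNIV psi] by simp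
    have "psi s * cnj (psi s) = 1" using complex_norm_square[of "psi s"] n by simp
    moreover have "psi s * psi (- s) = 1" using chars_neg[OF psi] by simp
    ultimately show ?thesis by (metis mult.left_commute mult.right_neutral mult.commute)
  qed
  have "phi * cnj phi = (\<Sum>r\<in>UNIV. \<Sum>s\<in>UNIV. (complex_of_real (p r) * psi r) * (complex_of_real (p s) * cnj (psi s)))"
    unfolding phi_def by (simp add: sum_product)
  also have "\<dots> = (\<Sum>r\<in>UNIV. \<Sum>s\<in>UNIV. complex_of_real (p r * p s) * psi (r - s))"
  proof (intro sum.cong refl)
    fix r s
    have "psi (r - s) = psi r * psi (- s)" using chars_mult[OF psi, of r "- s"] by simp
    then show "(complex_of_real (p r) * psi r) * (complex_of_real (p s) * cnj (psi s)) = complex_of_real (p r * p s) * psi (r - s)"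
      using cnjpsi[of s] by (simp add: algebra_simps)
  qed
  finally have pc: "phi * cnj phi = (\<Sum>r\<in>UNIV. \<Sum>s\<in>UNIV. complex_of_real (p r * p s) * psi (r - s))" .
  have "(norm phi)\<^sup>2 = Re (phi * cnj phi)"
    using arg_cong[OF complex_norm_square[of phi], of Re] by simp
  also have "\<dots> = (\<Sum>r\<in>UNIV. \<Sum>s\<in>UNIV. p r * p s * Re (psi (r - s)))" unfolding pc by simp
  also have "\<dots> \<le> (\<Sum>r\<in>UNIV. \<Sum>s\<in>UNIV. p r * p s * (1 - (if r - s \<in> K then 0 else gam)))"
    by (intro sum_mono mult_left_mono reb) (simp add: p0)
  also have "\<dots> = (\<Sum>s\<in>UNIV. p s * (\<Sum>r\<in>UNIV. p r) - gam * (p s * (\<Sum>r\<in>UNIV. if r - s \<in> K then 0 else p r)))"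
    apply (subst sum.swap)
    apply (intro sum.cong refl)
    apply (simp add: sum_distrib_left sum_subtractf[symmetric] algebra_simps if_distrib cong: if_cong)
    done
  also have "\<dots> \<le> (\<Sum>s\<in>UNIV. p s - gam * (p s * \<epsilon>))"
  proof (intro sum_mono)
    fix s
    have "gam * (p s * \<epsilon>) \<le> gam * (p s * (\<Sum>r\<in>UNIV. if r - s \<in> K then 0 else p r))"
      using offK[of s] p0[of s] gam0 by (intro mult_left_mono) auto
    then show "p s * (\<Sum>r\<in>UNIV. p r) - gam * (p s * (\<Sum>r\<in>UNIV. if r - s \<in> K then 0 else p r)) \<le> p s - gam * (p s * \<epsilon>)"
      using p1 by simp
  qed
  also have "\<dots> = 1 - gam * \<epsilon>"
    using p1 by (simp add: sum_subtractf sum_distrib_left[symmetric] sum_distrib_right[symmetric] mult.assoc[symmetric])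
  also have "\<dots> \<le> exp (- (gam * \<epsilon>))" using exp_ge_add_one_self[of "- (gam * \<epsilon>)"] by simp
  also have "\<dots> = (exp (- \<epsilon> / (real M)\<^sup>2))\<^sup>2"
  proof -
    have "- (gam * \<epsilon>) = (- \<epsilon> / (real M)\<^sup>2) + (- \<epsilon> / (real M)\<^sup>2)"
      unfolding gam_def by (simp add: field_simps)
    then have "exp (- (gam * \<epsilon>)) = exp (- \<epsilon> / (real M)\<^sup>2) * exp (- \<epsilon> / (real M)\<^sup>2)"
      by (simp only: exp_add)
    then show ?thesis by (simp only: power2_eq_square)
  qed
  finally have "(norm phi)\<^sup>2 \<le> (exp (- \<epsilon> / (real M)\<^sup>2))\<^sup>2" .
  then have "norm phi \<le> exp (- \<epsilon> / (real M)\<^sup>2)" by (rule power2_le_imp_le) simp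
  then show ?thesis unfolding phi_def M_def .
qed

lemma sum_fun_app: "(sum f S) j = (\<Sum>i\<in>S. f i j)"
  by (induction S rule: infinite_finite_induct) auto

lemma char_sum:
  assumes ch: "pchar UNIV (ch :: 'a::ab_group_add \<Rightarrow> complex)" and fS: "finite S"
  shows "ch (sum f S) = (\<Prod>i\<in>S. ch (f i))"
  using fS by (induction S rule: finite_induct) (auto simp: chars_mult[OF ch] chars_zero[OF ch])

lemma lin_decomp:
  fixes F :: "('k::finite \<Rightarrow> 'r::comm_ring_1) \<Rightarrow> 'n::ab_group_add"
    and scale :: "'r \<Rightarrow> 'n \<Rightarrow> 'n"
  assumes hom: "module_hom (\<lambda>r x i. r * x i) scale F"
  shows "F x = (\<Sum>i\<in>UNIV. scale (x i) (F (\<lambda>j. if j = i then 1 else 0)))"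
proof -
  have "x = (\<Sum>i\<in>UNIV. (\<lambda>j. x i * (if j = i then 1 else 0)))"
  proof (rule ext)
    fix j
    have "(\<Sum>i\<in>UNIV. (\<lambda>j. x i * (if j = i then 1 else 0))) j = (\<Sum>i\<in>UNIV. x i * (if j = i then 1 else 0))"
      by (rule sum_fun_app)
    also have "\<dots> = (\<Sum>i\<in>UNIV. if j = i then x i else 0)" by (rule sum.cong) auto
    also have "\<dots> = x j" by simp
    finally show "x j = (\<Sum>i\<in>UNIV. (\<lambda>j. x i * (if j = i then 1 else 0))) j" by simp
  qed
  then have "F x = F (\<Sum>i\<in>UNIV. (\<lambda>j. x i * (if j = i then 1 else 0)))" by simp
  also have "\<dots> = (\<Sum>i\<in>UNIV. F (\<lambda>j. x i * (if j = i then 1 else 0)))"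
    by (rule module_hom.sum[OF hom])
  also have "\<dots> = (\<Sum>i\<in>UNIV. scale (x i) (F (\<lambda>j. if j = i then 1 else 0)))"
    using module_hom.scale[OF hom] by simp
  finally show ?thesis .
qed

lemma fourier_bound:
  fixes p :: "'k::finite \<Rightarrow> 'r::comm_ring_1 \<Rightarrow> real"
    and F :: "('k \<Rightarrow> 'r) \<Rightarrow> 'n::{finite, ab_group_add}"
    and scale :: "'r \<Rightarrow> 'n \<Rightarrow> 'n" and A :: 'n
  assumes fin: "finite (UNIV :: 'r set)"
    and md: "module scale"
    and hom: "module_hom (\<lambda>r x i. r * x i) scale F"
    and code: "is_code F (\<delta> * real CARD('k))"
    and p0: "\<And>i r. p i r \<ge> 0" and p1: "\<And>i. (\<Sum>r\<in>UNIV. p i r) = 1"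
    and bal: "\<And>i I q S. elem_abelian_quot I q \<Longrightarrow> proper_affine_preimage I S \<Longrightarrow> (\<Sum>r\<in>S. p i r) \<le> 1 - \<epsilon>"
    and eps: "\<epsilon> > 0"
  shows "\<bar>(\<Sum>x\<in>{x. F x = A}. \<Prod>i\<in>UNIV. p i (x i)) - 1 / real CARD('n)\<bar>
           \<le> exp (- \<epsilon> * \<delta> * real CARD('k) / (real CARD('r)) ^ 2)"
proof -
  define g where "g i = F (\<lambda>j. if j = i then 1 else 0)" for i
  have lin: "F x = (\<Sum>i\<in>UNIV. scale (x i) (g i))" for x unfolding g_def by (rule lin_decomp[OF hom])
  define phi where "phi i ch = (\<Sum>r\<in>UNIV. complex_of_real (p i r) * ch (scale r (g i)))"
    for i and ch :: "'n \<Rightarrow> complex"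
  define N where "N = CARD('n)"
  define B where "B = exp (- \<epsilon> * \<delta> * real CARD('k) / (real CARD('r)) ^ 2)"
  have N0: "N > 0" unfolding N_def by simp
  have finX: "finite (UNIV :: ('k \<Rightarrow> 'r) set)"
    using finite_PiE[of "UNIV :: 'k set" "\<lambda>_. UNIV :: 'r set"] fin by simp
  have finn: "finite (UNIV :: 'n set)" by simp
  have fc: "finite (chars :: ('n \<Rightarrow> complex) set)" by (rule finite_chars[OF finn])
  have cardc: "card (chars :: ('n \<Rightarrow> complex) set) = N" unfolding N_def by (rule card_chars[OF finn])
  have chF: "ch (F x) = (\<Prod>i\<in>UNIV. ch (scale (x i) (g i)))" if "pchar UNIV ch" for ch x
    unfolding lin[of x] by (rule char_sum[OF that]) simp
  have psich: "pchar UNIV (\<lambda>r. ch (scale r (g i)))" if ch: "pchar UNIV ch" for ch i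
    unfolding pchar_def
    using chars_mult[OF ch] chars_zero[OF ch] module.scale_left_distrib[OF md] module.scale_zero_left[OF md]
    by simp
  have normch: "norm (ch y) = 1" if "pchar UNIV ch" for ch :: "'n \<Rightarrow> complex" and y
    by (rule pchar_norm[OF finn subgrp_UNIV that]) simp
  have phi_le1: "norm (phi i ch) \<le> 1" if "pchar UNIV ch" for i ch
  proof -
    have "norm (phi i ch) \<le> (\<Sum>r\<in>UNIV. norm (complex_of_real (p i r) * ch (scale r (g i))))"
      unfolding phi_def by (rule norm_sum)
    also have "\<dots> = (\<Sum>r\<in>UNIV. p i r)" using normch[OF that] p0 by (simp add: norm_mult)
    finally show ?thesis using p1 by simp
  qed
  have per_ch: "(\<Prod>i\<in>UNIV. norm (phi i ch)) \<le> B" if chc: "ch \<in> chars" and nt: "ch \<noteq> (\<lambda>_. 1)" for ch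
  proof -
    have ch: "pchar UNIV ch" using chc unfolding chars_def by simp
    define G where "G = {i. \<exists>r. ch (scale r (g i)) \<noteq> 1}"
    define b where "b = exp (- \<epsilon> / (real CARD('r))\<^sup>2)"
    have b0: "0 \<le> b" unfolding b_def by simp
    have bG: "norm (phi i ch) \<le> b" if iG: "i \<in> G" for i
    proof -
      obtain r0 where r0: "ch (scale r0 (g i)) \<noteq> 1" using iG unfolding G_def by blast
      show ?thesis unfolding phi_def b_def
        by (rule char_bound[OF fin psich[OF ch] r0 p0 p1 bal])
    qed
    have cardG: "real (card G) \<ge> \<delta> * real CARD('k)"
    proof (rule ccontr)
      assume "\<not> ?thesis"
      then have "real (card G) < \<delta> * real CARD('k)" by simp
      then have surjV: "F ` Vsub G = UNIV" using code unfolding is_code_def by blast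
      obtain y where y: "ch y \<noteq> 1" using nt by auto
      obtain x where x: "x \<in> Vsub G" "F x = y" using surjV by (metis UNIV_I imageE)
      have "ch (scale (x i) (g i)) = 1" for i
      proof (cases "i \<in> G")
        case True
        then have "x i = 0" using x(1) unfolding Vsub_def by simp
        then show ?thesis using module.scale_zero_left[OF md] chars_zero[OF ch] by simp
      next
        case False
        then show ?thesis unfolding G_def by simp
      qed
      then have "ch (F x) = 1" using chF[OF ch] by simp
      then show False using x y by simp
    qed
    have "(\<Prod>i\<in>UNIV. norm (phi i ch)) \<le> (\<Prod>i\<in>UNIV. if i \<in> G then b else 1)"
      by (intro prod_mono) (auto simp: bG phi_le1[OF ch])
    also have "\<dots> = b ^ card G"
      by (simp add: prod.If_cases Int_def)
    also have "\<dots> = exp (real (card G) * (- \<epsilon> / (real CARD('r))\<^sup>2))"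
      unfolding b_def by (simp add: exp_of_nat_mult[symmetric])
    also have "\<dots> \<le> B" unfolding B_def
    proof (rule exp_mono)
      have "\<epsilon> / (real CARD('r))\<^sup>2 \<ge> 0" using eps by simp
      then have "(\<delta> * real CARD('k)) * (\<epsilon> / (real CARD('r))\<^sup>2) \<le> real (card G) * (\<epsilon> / (real CARD('r))\<^sup>2)"
        using cardG by (intro mult_right_mono) auto
      then show "real (card G) * (- \<epsilon> / (real CARD('r))\<^sup>2) \<le> - \<epsilon> * \<delta> * real CARD('k) / (real CARD('r))\<^sup>2"
        by (simp add: algebra_simps)
    qed
    finally show ?thesis .
  qed
  define Q where "Q = (\<Sum>x\<in>{x. F x = A}. \<Prod>i\<in>UNIV. p i (x i))"
  define w where "w x = complex_of_real (\<Prod>i\<in>UNIV. p i (x i))" for x :: "'k \<Rightarrow> 'r"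
  have "complex_of_real Q = (\<Sum>x\<in>UNIV. if F x - A = 0 then w x else 0)"
    unfolding Q_def w_def using sum.inter_filter[OF finX, of "\<lambda>x. complex_of_real (\<Prod>i\<in>UNIV. p i (x i))" "\<lambda>x. F x - A = 0"]
    by simp
  also have "\<dots> = (\<Sum>x\<in>UNIV. w x * ((\<Sum>ch\<in>chars. ch (F x - A)) / of_nat N))"
    unfolding N_def by (intro sum.cong refl) (simp add: char_inversion[OF finn])
  also have "\<dots> = (\<Sum>ch\<in>chars. (\<Sum>x\<in>UNIV. w x * ch (F x - A))) / of_nat N"
    by (simp add: sum_divide_distrib sum_distrib_left sum.swap[of _ UNIV] mult.assoc)
  also have "\<dots> = (\<Sum>ch\<in>chars. ch (- A) * (\<Prod>i\<in>UNIV. phi i ch)) / of_nat N"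
  proof -
    have "(\<Sum>x\<in>UNIV. w x * ch (F x - A)) = ch (- A) * (\<Prod>i\<in>UNIV. phi i ch)" if "ch \<in> chars" for ch :: "'n \<Rightarrow> complex"
    proof -
      have ch: "pchar UNIV ch" using that unfolding chars_def by simp
      have "(\<Sum>x\<in>UNIV. w x * ch (F x - A)) = (\<Sum>x\<in>UNIV. ch (- A) * (\<Prod>i\<in>UNIV. complex_of_real (p i (x i)) * ch (scale (x i) (g i))))"
      proof (intro sum.cong refl)
        fix x
        have "ch (F x - A) = ch (F x) * ch (- A)" using chars_mult[OF ch, of "F x" "- A"] by simp
        then show "w x * ch (F x - A) = ch (- A) * (\<Prod>i\<in>UNIV. complex_of_real (p i (x i)) * ch (scale (x i) (g i)))"
          unfolding w_def chF[OF ch] by (simp add: prod.distrib algebra_simps)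
      qed
      also have "\<dots> = ch (- A) * (\<Sum>x\<in>UNIV. \<Prod>i\<in>UNIV. complex_of_real (p i (x i)) * ch (scale (x i) (g i)))"
        by (simp add: sum_distrib_left)
      also have "(\<Sum>x\<in>UNIV. \<Prod>i\<in>UNIV. complex_of_real (p i (x i)) * ch (scale (x i) (g i))) = (\<Prod>i\<in>UNIV. phi i ch)"
        unfolding phi_def using prod_sum_PiE[of "UNIV :: 'k set" "\<lambda>_. UNIV :: 'r set" "\<lambda>i r. complex_of_real (p i r) * ch (scale r (g i))"] fin
        by simp
      finally show ?thesis .
    qed
    then show ?thesis by (intro arg_cong[where f = "\<lambda>t. t / of_nat N"] sum.cong refl) auto
  qed
  finally have QF: "complex_of_real Q = (\<Sum>ch\<in>chars. ch (- A) * (\<Prod>i\<in>UNIV. phi i ch)) / of_nat N" .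
  have triv: "(\<lambda>_. 1) (- A) * (\<Prod>i\<in>UNIV. phi i (\<lambda>_. 1)) = 1"
  proof -
    have "phi i (\<lambda>_. 1) = 1" for i
    proof -
      have "phi i (\<lambda>_. 1) = complex_of_real (\<Sum>r\<in>UNIV. p i r)" unfolding phi_def by simp
      then show ?thesis using p1 by simp
    qed
    then show ?thesis by simp
  qed
  have "(\<Sum>ch\<in>chars. ch (- A) * (\<Prod>i\<in>UNIV. phi i ch)) = 1 + (\<Sum>ch\<in>chars - {\<lambda>_. 1}. ch (- A) * (\<Prod>i\<in>UNIV. phi i ch))"
    using sum.remove[OF fc one_char, of "\<lambda>ch. ch (- A) * (\<Prod>i\<in>UNIV. phi i ch)"] triv by simp
  then have "complex_of_real Q - 1 / of_nat N = (\<Sum>ch\<in>chars - {\<lambda>_. 1}. ch (- A) * (\<Prod>i\<in>UNIV. phi i ch)) / of_nat N"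
    using QF N0 by (simp add: diff_divide_distrib add_divide_distrib)
  then have "norm (complex_of_real Q - 1 / of_nat N) = norm (\<Sum>ch\<in>chars - {\<lambda>_. 1}. ch (- A) * (\<Prod>i\<in>UNIV. phi i ch)) / real N"
    by (simp add: norm_divide)
  also have "\<dots> \<le> (\<Sum>ch\<in>(chars :: ('n \<Rightarrow> complex) set) - {\<lambda>_. 1}. B) / real N"
  proof -
    have S: "(\<Sum>ch\<in>chars - {\<lambda>_. 1}. norm (ch (- A) * (\<Prod>i\<in>UNIV. phi i ch))) \<le> (\<Sum>ch\<in>(chars :: ('n \<Rightarrow> complex) set) - {\<lambda>_. 1}. B)"
    proof (rule sum_mono)
      fix ch :: "'n \<Rightarrow> complex" assume chc: "ch \<in> chars - {\<lambda>_. 1}"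
      then have ch: "pchar UNIV ch" unfolding chars_def by simp
      have "norm (ch (- A) * (\<Prod>i\<in>UNIV. phi i ch)) = (\<Prod>i\<in>UNIV. norm (phi i ch))"
        using normch[OF ch] by (simp add: norm_mult prod_norm)
      also have "\<dots> \<le> B" using per_ch chc by simp
      finally show "norm (ch (- A) * (\<Prod>i\<in>UNIV. phi i ch)) \<le> B" .
    qed
    have "norm (\<Sum>ch\<in>chars - {\<lambda>_. 1}. ch (- A) * (\<Prod>i\<in>UNIV. phi i ch)) \<le> (\<Sum>ch\<in>(chars :: ('n \<Rightarrow> complex) set) - {\<lambda>_. 1}. B)"
      by (rule order.trans[OF norm_sum S])
    then show ?thesis by (intro divide_right_mono) auto
  qed
  also have "\<dots> = real (N - 1) * B / real N"
  proof -
    have "card ((chars :: ('n \<Rightarrow> complex) set) - {\<lambda>_. 1}) = N - 1"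
      using cardc by (simp add: card_Diff_singleton one_char)
    then show ?thesis by simp
  qed
  also have "\<dots> \<le> B"
  proof -
    have "B \<ge> 0" unfolding B_def by simp
    moreover have "real (N - 1) \<le> real N" by simp
    ultimately have "real (N - 1) * B \<le> real N * B" by (intro mult_right_mono) auto
    then show ?thesis using N0 by (simp add: divide_le_eq mult.commute)
  qed
  finally have "norm (complex_of_real Q - 1 / of_nat N) \<le> B" .
  moreover have "norm (complex_of_real Q - 1 / of_nat N) = \<bar>Q - 1 / real N\<bar>"
  proof -
    have "complex_of_real Q - 1 / of_nat N = complex_of_real (Q - 1 / real N)" by simp
    then show ?thesis by (simp only: norm_of_real)
  qed
  ultimately show ?thesis unfolding Q_def B_def N_def by simp
qed

theorem lemma2p4:
  fixes a :: "'t::idom"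
    and \<pi> :: "'t \<Rightarrow> 'r::comm_ring_1"
    and scale :: "'r \<Rightarrow> 'n::{finite, ab_group_add} \<Rightarrow> 'n"
    and M :: "'w measure"
    and X :: "'k::finite \<Rightarrow> 'w \<Rightarrow> 'r"
    and F :: "('k \<Rightarrow> 'r) \<Rightarrow> 'n"
    and A :: 'n
    and \<delta> \<epsilon> :: real
  assumes "countable (UNIV :: 't set)"
    and "dedekind_domain TYPE('t)"
    and "\<And>J::'t set. is_ideal J \<Longrightarrow> J \<noteq> {0} \<Longrightarrow> finite_quotient J"
    and "a \<noteq> 0" and "\<not> a dvd 1"
    and "\<And>x y. \<pi> (x + y) = \<pi> x + \<pi> y"
    and "\<And>x y. \<pi> (x * y) = \<pi> x * \<pi> y"
    and "\<pi> 1 = 1"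
    and "surj \<pi>"
    and "\<And>x. \<pi> x = 0 \<longleftrightarrow> a dvd x"
    and "module scale"
    and "\<delta> > 0" and "\<epsilon> > 0"
    and "prob_space M"
    and "balanced_vec M \<epsilon> X"
    and "module_hom (\<lambda>r x i. r * x i) scale F"
    and "is_code F (\<delta> * real CARD('k))"
  shows "\<bar>measure M {\<omega> \<in> space M. F (\<lambda>i. X i \<omega>) = A} - 1 / real CARD('n)\<bar>
           \<le> exp (- \<epsilon> * \<delta> * real CARD('k) / (real CARD('r)) ^ 2)"
proof -
  interpret P: prob_space M by (rule assms(14))
  have pidiff: "\<pi> (x - y) = \<pi> x - \<pi> y" for x y
    using assms(6)[of "x - y" y] by (simp add: eq_diff_eq)
  have fin: "finite (UNIV :: 'r set)"
  proof -
    define J where "J = {x::'t. a dvd x}"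
    have "is_ideal J" unfolding is_ideal_def J_def
    proof (intro conjI ballI allI)
      show "0 \<in> {x. a dvd x}" by simp
    next
      fix x y assume "x \<in> {x. a dvd x}" "y \<in> {x. a dvd x}"
      then show "x + y \<in> {x. a dvd x}" by (simp add: dvd_add)
    next
      fix r x assume "x \<in> {x. a dvd x}"
      then show "r * x \<in> {x. a dvd x}" by (simp add: dvd_mult)
    qed
    moreover have "J \<noteq> {0}"
    proof
      assume J0: "J = {0}"
      have "a \<in> J" unfolding J_def by simp
      then have "a \<in> {0}" using J0 by simp
      then show False using assms(4) by simp
    qed
    ultimately have fq: "finite_quotient J" by (rule assms(3))
    define C where "C = (\<lambda>x. {y. x - y \<in> J}) ` UNIV"
    have fC: "finite C" using fq unfolding finite_quotient_def C_def .
    have "UNIV \<subseteq> (\<lambda>S. \<pi> (SOME y. y \<in> S)) ` C"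
    proof
      fix t :: 'r
      obtain x where x: "t = \<pi> x" using assms(9) by (metis surjD)
      define S where "S = {y. x - y \<in> J}"
      have SC: "S \<in> C" unfolding S_def C_def by blast
      have "x \<in> S" unfolding S_def J_def by simp
      then have "(SOME y. y \<in> S) \<in> S" by (rule someI)
      then have "a dvd x - (SOME y. y \<in> S)" unfolding S_def J_def by simp
      then have "\<pi> (x - (SOME y. y \<in> S)) = 0" using assms(10) by blast
      then have "\<pi> (SOME y. y \<in> S) = t" using x pidiff by simp
      then show "t \<in> (\<lambda>S. \<pi> (SOME y. y \<in> S)) ` C" using SC by (metis image_eqI)
    qed
    then show ?thesis using fC by (metis finite_imageI finite_subset)
  qed
  have bv: "P.indep_vars (\<lambda>_. count_space UNIV) X UNIV" and brv: "\<And>i. balanced_rv M \<epsilon> (X i)"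
    using assms(15) unfolding balanced_vec_def by blast+
  have meas: "X i \<in> measurable M (count_space UNIV)" for i
    using brv[of i] unfolding balanced_rv_def by simp
  define p where "p i r = measure M {\<omega> \<in> space M. X i \<omega> = r}" for i r
  have ev: "{\<omega> \<in> space M. X i \<omega> = r} \<in> sets M" for i r
  proof -
    have "X i -` {r} \<inter> space M \<in> sets M" by (rule measurable_sets[OF meas]) simp
    moreover have "X i -` {r} \<inter> space M = {\<omega> \<in> space M. X i \<omega> = r}" by auto
    ultimately show ?thesis by simp
  qed
  have psum: "measure M {\<omega> \<in> space M. X i \<omega> \<in> S} = (\<Sum>r\<in>S. p i r)" for i S
  proof -
    have fS: "finite S" using fin by (rule finite_subset[rotated]) simp
    have "{\<omega> \<in> space M. X i \<omega> \<in> S} = (\<Union>r\<in>S. {\<omega> \<in> space M. X i \<omega> = r})" by auto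
    moreover have "measure M (\<Union>r\<in>S. {\<omega> \<in> space M. X i \<omega> = r}) = (\<Sum>r\<in>S. measure M {\<omega> \<in> space M. X i \<omega> = r})"
      by (rule P.finite_measure_finite_Union[OF fS]) (auto simp: ev disjoint_family_on_def)
    ultimately show ?thesis unfolding p_def by simp
  qed
  have p0: "p i r \<ge> 0" for i r unfolding p_def by simp
  have p1: "(\<Sum>r\<in>UNIV. p i r) = 1" for i
  proof -
    have "(\<Sum>r\<in>UNIV. p i r) = measure M {\<omega> \<in> space M. X i \<omega> \<in> UNIV}" by (rule psum[symmetric])
    also have "{\<omega> \<in> space M. X i \<omega> \<in> UNIV} = space M" by simp
    finally show ?thesis using P.prob_space by simp
  qed
  have bal: "(\<Sum>r\<in>S. p i r) \<le> 1 - \<epsilon>" if "elem_abelian_quot I q" "proper_affine_preimage I S" for i I q S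
    using brv[of i] that unfolding balanced_rv_def psum by blast
  define E where "E x = {\<omega> \<in> space M. \<forall>i. X i \<omega> = x i}" for x :: "'k \<Rightarrow> 'r"
  have indep: "P.indep_sets (\<lambda>i. {X i -` B \<inter> space M | B. B \<in> sets (count_space UNIV)}) UNIV"
    using bv unfolding P.indep_vars_def2 by simp
  have Ex: "E x = (\<Inter>j\<in>UNIV. X j -` {x j} \<inter> space M)" for x
  proof (rule set_eqI)
    fix \<omega>
    show "\<omega> \<in> E x \<longleftrightarrow> \<omega> \<in> (\<Inter>j\<in>UNIV. X j -` {x j} \<inter> space M)"
    proof
      assume "\<omega> \<in> E x"
      then show "\<omega> \<in> (\<Inter>j\<in>UNIV. X j -` {x j} \<inter> space M)" unfolding E_def by simp
    next
      assume w: "\<omega> \<in> (\<Inter>j\<in>UNIV. X j -` {x j} \<inter> space M)"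
      then have "\<omega> \<in> space M" by (rule INT_E[of _ _ _ undefined]) simp_all
      moreover have "X i \<omega> = x i" for i using w by (rule INT_E[of _ _ _ i]) simp_all
      ultimately show "\<omega> \<in> E x" unfolding E_def by simp
    qed
  qed
  have Eev: "E x \<in> sets M" for x
  proof -
    have "(\<Inter>j\<in>UNIV. X j -` {x j} \<inter> space M) \<in> sets M"
      using measurable_sets[OF meas] by (intro sets.finite_INT) auto
    then show ?thesis using Ex by simp
  qed
  have probE: "measure M (E x) = (\<Prod>i\<in>UNIV. p i (x i))" for x
  proof -
    have ind2: "\<forall>J\<subseteq>UNIV. J \<noteq> {} \<longrightarrow> finite J \<longrightarrow> (\<forall>B\<in>Pi J (\<lambda>i. {X i -` B \<inter> space M | B. B \<in> sets (count_space UNIV)}).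
            measure M (\<Inter>j\<in>J. B j) = (\<Prod>j\<in>J. measure M (B j)))"
      using indep unfolding P.indep_sets_def by (rule conjunct2)
    have Bin: "(\<lambda>j. X j -` {x j} \<inter> space M) \<in> Pi UNIV (\<lambda>i. {X i -` B \<inter> space M | B. B \<in> sets (count_space UNIV)})"
    proof (rule Pi_I)
      fix j :: 'k
      show "X j -` {x j} \<inter> space M \<in> {X j -` B \<inter> space M | B. B \<in> sets (count_space UNIV)}"
        by (rule CollectI, rule exI[of _ "{x j}"]) simp
    qed
    have "measure M (\<Inter>j\<in>UNIV. X j -` {x j} \<inter> space M) = (\<Prod>j\<in>UNIV. measure M (X j -` {x j} \<inter> space M))"
      using ind2[rule_format, OF subset_UNIV UNIV_not_empty finite Bin] .
    moreover have "X j -` {x j} \<inter> space M = {\<omega> \<in> space M. X j \<omega> = x j}" for j by auto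
    ultimately show ?thesis unfolding Ex p_def by simp
  qed
  have finX: "finite (UNIV :: ('k \<Rightarrow> 'r) set)"
    using finite_PiE[of "UNIV :: 'k set" "\<lambda>_. UNIV :: 'r set"] fin by simp
  have "{\<omega> \<in> space M. F (\<lambda>i. X i \<omega>) = A} = (\<Union>x\<in>{x. F x = A}. E x)"
  proof (rule set_eqI)
    fix \<omega>
    show "\<omega> \<in> {\<omega> \<in> space M. F (\<lambda>i. X i \<omega>) = A} \<longleftrightarrow> \<omega> \<in> (\<Union>x\<in>{x. F x = A}. E x)"
    proof
      assume "\<omega> \<in> {\<omega> \<in> space M. F (\<lambda>i. X i \<omega>) = A}"
      then show "\<omega> \<in> (\<Union>x\<in>{x. F x = A}. E x)" unfolding E_def
        by (intro UN_I[of "\<lambda>i. X i \<omega>"]) simp_all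
    next
      assume "\<omega> \<in> (\<Union>x\<in>{x. F x = A}. E x)"
      then obtain x where "F x = A" "\<omega> \<in> E x" by blast
      moreover then have "(\<lambda>i. X i \<omega>) = x" unfolding E_def by auto
      ultimately show "\<omega> \<in> {\<omega> \<in> space M. F (\<lambda>i. X i \<omega>) = A}" unfolding E_def by simp
    qed
  qed
  moreover have "measure M (\<Union>x\<in>{x. F x = A}. E x) = (\<Sum>x\<in>{x. F x = A}. measure M (E x))"
  proof (rule P.finite_measure_finite_Union)
    show "finite {x. F x = A}" using finX by (rule finite_subset[rotated]) simp
    show "E ` {x. F x = A} \<subseteq> sets M" using Eev by auto
    show "disjoint_family_on E {x. F x = A}"
      unfolding disjoint_family_on_def E_def by (auto simp: fun_eq_iff)
  qed
  ultimately have "measure M {\<omega> \<in> space M. F (\<lambda>i. X i \<omega>) = A} = (\<Sum>x\<in>{x. F x = A}. \<Prod>i\<in>UNIV. p i (x i))"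
    using probE by simp
  moreover have "\<bar>(\<Sum>x\<in>{x. F x = A}. \<Prod>i\<in>UNIV. p i (x i)) - 1 / real CARD('n)\<bar>
           \<le> exp (- \<epsilon> * \<delta> * real CARD('k) / (real CARD('r)) ^ 2)"
    by (rule fourier_bound[OF fin assms(11) assms(16) assms(17) p0 p1 bal assms(13)])
  ultimately show ?thesis by simp
qed

end
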